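(* Let $k\ge 2$ be a non-square integer, let $0=t_0<t_1<\cdots$ be the increasing enumeration of all nonnegative integers $t$ with $kT_t$ triangular, let $\xi_n\ge 0$ satisfy $T_{\xi_n}=kT_{t_n}$, and let $r$ and $\kappa=t_{r-1}+t_r$ be as in Theorem 1. Then for every integer $n\ge r$, $$\left(\xi_n-\xi_{n-r}\right)^2-\kappa\left(\xi_n+2\xi_n\xi_{n-r}+\xi_{n-r}\right)=\xi_r\left(\xi_{r-1}+1\right).$$
   Context: $T_m=\frac{m(m+1)}{2}$ denotes the $m$-th triangular number; an integer is triangular if it equals $T_m$ for some integer $m\ge0$. Theorem 1 (referenced): for non-square $k\ge2$ there is a positive integer $r$ (the rank) such that with $\kappa=t_{r-1}+t_r$ one has $\kappa=\xi_r-\xi_{r-1}-1$, $(t_{2r}-t_{r-1})/t_r=2\kappa+3$, and $t_n=2(\kappa+1)t_{n-r}-t_{n-2r}+\kappa$, $\xi_n=2(\kappa+1)\xi_{n-r}-\xi_{n-2r}+\kappa$ for all $n\ge 2r$. *)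

theory Defs
  imports Main "HOL-Library.Infinite_Set"
begin

definition tri :: "nat \<Rightarrow> nat" where
  "tri m = m * (m + 1) div 2"

definition is_triangular :: "nat \<Rightarrow> bool" where
  "is_triangular a \<longleftrightarrow> (\<exists>m. a = tri m)"

definition tseq :: "nat \<Rightarrow> nat \<Rightarrow> nat" where
  "tseq k n = enumerate {t. is_triangular (k * tri t)} n"

definition xiseq :: "nat \<Rightarrow> nat \<Rightarrow> nat" where
  "xiseq k n = (THE x. tri x = k * tri (tseq k n))"

end

theory Submission imports Defs Complex_Main begin

lemma alg_real:
  fixes x y p q c k :: real
  assumes k: "k > 1" and c: "c \<noteq> 0"
    and e0: "x^2 - k*p^2 = 1-k" and e1: "y^2 - k*q^2 = 1-k"
    and e2: "(2*c*y-x)^2 - k*(2*c*q-p)^2 = 1-k"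
  shows "x^2+y^2-2*c*x*y = (1-k)*(1-c^2)"
proof -
  define g where "g = 1-k"
  have g0: "g \<noteq> 0" using k by (simp add: g_def)
  define s where "s = sqrt k"
  have ss: "s*s = k" using k by (simp add: s_def)
  have cr0: "c*(c*g - (x*y - k*p*q)) = 0"
  proof -
    have "(2*c*y-x)^2 - k*(2*c*q-p)^2 = 4*c^2*(y^2-k*q^2) - 4*c*(x*y-k*p*q) + (x^2-k*p^2)"
      by (simp add: power2_eq_square algebra_simps)
    then have "4*c^2*g - 4*c*(x*y-k*p*q) + g = g" using e0 e1 e2 unfolding g_def by simp
    then have "4*(c*(c*g - (x*y - k*p*q))) = 0" by (simp add: power2_eq_square algebra_simps)
    then show ?thesis by simp
  qed
  have cr: "x*y - k*p*q = c*g" using cr0 c by simp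
  define P0 where "P0 = x+s*p"
  define M0 where "M0 = x-s*p"
  define P1 where "P1 = y+s*q"
  define M1 where "M1 = y-s*q"
  have h0: "P0*M0 = g" unfolding P0_def M0_def g_def using e0 ss by (simp add: power2_eq_square algebra_simps)
  have h1: "P1*M1 = g" unfolding P1_def M1_def g_def using e1 ss by (simp add: power2_eq_square algebra_simps)
  have h2: "P1*M0+P0*M1 = 2*c*g" unfolding P0_def M0_def P1_def M1_def using cr ss by (simp add: algebra_simps)
  have nz: "P0 \<noteq> 0" "M0 \<noteq> 0" "P1 \<noteq> 0" "M1 \<noteq> 0" using h0 h1 g0 by auto
  have "(P1^2+P0^2-2*c*P1*P0)*(M0*M1) = g*(P1*M0+P0*M1) - 2*c*g*g"
    using h0 h1 by (simp add: power2_eq_square) (simp add: algebra_simps h0[symmetric] h1[symmetric])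
  also have "\<dots> = 0" using h2 by simp
  finally have FP: "P1^2+P0^2-2*c*P1*P0 = 0" using nz by simp
  have "(M1^2+M0^2-2*c*M1*M0)*(P0*P1) = g*(P1*M0+P0*M1) - 2*c*g*g"
    using h0 h1 by (simp add: power2_eq_square) (simp add: algebra_simps h0[symmetric] h1[symmetric])
  also have "\<dots> = 0" using h2 by simp
  finally have FM: "M1^2+M0^2-2*c*M1*M0 = 0" using nz by simp
  have "(P1^2+P0^2-2*c*P1*P0) + (M1^2+M0^2-2*c*M1*M0) = 2*(x^2+y^2-2*c*x*y) + 2*k*(p^2+q^2-2*c*p*q)"
    unfolding P0_def M0_def P1_def M1_def using ss by (simp add: power2_eq_square algebra_simps)
  then have A: "x^2+y^2-2*c*x*y + k*(p^2+q^2-2*c*p*q) = 0" using FP FM by simp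
  have B: "x^2+y^2-2*c*x*y - k*(p^2+q^2-2*c*p*q) = 2*g - 2*c*(c*g)"
  proof -
    have "x^2+y^2-2*c*x*y - k*(p^2+q^2-2*c*p*q) = (x^2-k*p^2)+(y^2-k*q^2) - 2*c*(x*y-k*p*q)"
      by (simp add: algebra_simps)
    then show ?thesis using e0 e1 cr unfolding g_def by simp
  qed
  from A B show ?thesis unfolding g_def by (simp add: algebra_simps power2_eq_square)
qed

lemma alg_int:
  fixes x y p q c k :: int
  assumes k: "k > 1" and c: "c \<noteq> 0"
    and e0: "x^2 - k*p^2 = 1-k" and e1: "y^2 - k*q^2 = 1-k"
    and e2: "(2*c*y-x)^2 - k*(2*c*q-p)^2 = 1-k"
  shows "x^2+y^2-2*c*x*y = (1-k)*(1-c^2)"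
proof -
  have r0: "real_of_int x^2 - real_of_int k * real_of_int p^2 = 1 - real_of_int k"
    using arg_cong[OF e0, of real_of_int] by simp
  have r1: "real_of_int y^2 - real_of_int k * real_of_int q^2 = 1 - real_of_int k"
    using arg_cong[OF e1, of real_of_int] by simp
  have r2: "(2*real_of_int c*real_of_int y - real_of_int x)^2 - real_of_int k * (2*real_of_int c*real_of_int q - real_of_int p)^2 = 1 - real_of_int k"
    using arg_cong[OF e2, of real_of_int] by simp
  have "real_of_int x^2+ real_of_int y^2-2*real_of_int c*real_of_int x*real_of_int y = (1-real_of_int k)*(1-real_of_int c^2)"
    by (rule alg_real[OF _ _ r0 r1 r2]) (use k c in simp_all)
  then have "real_of_int (x^2+y^2-2*c*x*y) = real_of_int ((1-k)*(1-c^2))" by simp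
  then show ?thesis by (simp only: of_int_eq_iff)
qed

lemma two_tri: "2 * tri x = x * (x + 1)"
  unfolding tri_def by simp

lemma tri_strict: "x < y \<Longrightarrow> tri x < tri y"
proof -
  assume "x < y"
  then have "x * (x+1) < y * (y+1)" by (intro mult_strict_mono) auto
  then show ?thesis using two_tri[of x] two_tri[of y] by linarith
qed

lemma tri_inj: "tri x = tri y \<Longrightarrow> x = y"
  by (metis linorder_neq_iff tri_strict less_irrefl)

lemma tri_0: "tri 0 = 0" unfolding tri_def by simp

lemma enum_fin: "finite S \<Longrightarrow> card S \<le> m \<Longrightarrow> enumerate S m = enumerate ({}::nat set) 0"
proof (induction m arbitrary: S)
  case 0
  then show ?case by simp
next
  case (Suc m)
  show ?case
  proof (cases "S = {}")
    case True
    then show ?thesis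
      using Suc.IH[of "{}"] by (simp add: enumerate_Suc)
  next
    case False
    then have "(LEAST n. n \<in> S) \<in> S" by (meson LeastI_ex ex_in_conv)
    then have "card (S - {LEAST n. n \<in> S}) \<le> m" using Suc.prems by (simp add: card_Diff_singleton)
    then show ?thesis using Suc.IH[of "S - {LEAST n. n \<in> S}"] Suc.prems by (simp add: enumerate_Suc)
  qed
qed

theorem mainTheorem3:
  fixes k r n :: nat and \<kappa> :: int
  assumes k2: "k \<ge> 2"
    and nonsq: "\<not> (\<exists>m. m ^ 2 = k)"
    and r_pos: "r \<ge> 1"
    and kappa_def: "\<kappa> = int (tseq k (r - 1)) + int (tseq k r)"
    and kappa_xi: "\<kappa> = int (xiseq k r) - int (xiseq k (r - 1)) - 1"
    and ratio: "int (tseq k (2 * r)) - int (tseq k (r - 1)) = (2 * \<kappa> + 3) * int (tseq k r)"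
    and rec_t: "\<And>m. m \<ge> 2 * r \<Longrightarrow>
        int (tseq k m) = 2 * (\<kappa> + 1) * int (tseq k (m - r)) - int (tseq k (m - 2 * r)) + \<kappa>"
    and rec_xi: "\<And>m. m \<ge> 2 * r \<Longrightarrow>
        int (xiseq k m) = 2 * (\<kappa> + 1) * int (xiseq k (m - r)) - int (xiseq k (m - 2 * r)) + \<kappa>"
    and n_ge: "n \<ge> r"
  shows "(int (xiseq k n) - int (xiseq k (n - r))) ^ 2
           - \<kappa> * (int (xiseq k n) + 2 * int (xiseq k n) * int (xiseq k (n - r)) + int (xiseq k (n - r)))
         = int (xiseq k r) * (int (xiseq k (r - 1)) + 1)"
proof -
  define S where "S = {t. is_triangular (k * tri t)}"
  define T where "T = tseq k"
  define X where "X = xiseq k"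
  have Tdef: "\<And>m. T m = enumerate S m" unfolding T_def S_def tseq_def by simp
  have X0: "\<And>m. T m = 0 \<Longrightarrow> X m = 0"
  proof -
    fix m assume "T m = 0"
    then show "X m = 0" unfolding X_def xiseq_def T_def[symmetric]
      using \<open>T m = 0\<close> tri_inj[of _ 0] by (simp add: tri_0) (rule the_equality, auto simp: tri_0)
  qed
  have zS: "0 \<in> S" unfolding S_def is_triangular_def using tri_0 by auto
  have T0: "T 0 = 0" unfolding Tdef enumerate_0 using zS by (metis Least_le le_zero_eq)
  have infS: "infinite S"
  proof
    assume fin: "finite S"
    define z where "z = enumerate ({}::nat set) 0"
    have Tz: "\<And>m. m \<ge> card S \<Longrightarrow> T m = z" unfolding Tdef z_def using enum_fin fin by blast
    define m where "m = card S + 2 * r"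
    have "int (T m) = 2 * (\<kappa> + 1) * int (T (m - r)) - int (T (m - 2 * r)) + \<kappa>"
      using rec_t[of m] unfolding T_def m_def by simp
    moreover have "T m = z" "T (m - r) = z" "T (m - 2*r) = z" using Tz unfolding m_def by auto
    ultimately have "\<kappa> * (2 * int z + 1) = 0" by (simp add: algebra_simps)
    then have "\<kappa> = 0" by (simp add: mult_eq_0_iff)
    then have "T (r-1) = 0" "T r = 0" using kappa_def unfolding T_def by auto
    then have "X (r-1) = 0" "X r = 0" using X0 by auto
    then show False using kappa_xi \<open>\<kappa> = 0\<close> unfolding X_def by simp
  qed
  have triX: "\<And>m. tri (X m) = k * tri (T m)"
  proof -
    fix m
    have "T m \<in> S" unfolding Tdef using enumerate_in_set[OF infS] .
    then obtain x where x: "k * tri (T m) = tri x" unfolding S_def is_triangular_def by auto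
    have "X m = x" unfolding X_def xiseq_def T_def[symmetric]
      by (rule the_equality) (use x tri_inj in auto)
    then show "tri (X m) = k * tri (T m)" using x by simp
  qed
  define u where "u = (\<lambda>m. 2 * int (X m) + 1)"
  define v where "v = (\<lambda>m. 2 * int (T m) + 1)"
  have pell: "\<And>m. (u m)^2 - int k * (v m)^2 = 1 - int k"
  proof -
    fix m
    have a: "2 * int (tri (X m)) = int (X m) * (int (X m) + 1)"
      using arg_cong[OF two_tri[of "X m"], of int] by (simp add: algebra_simps)
    have b: "2 * int (tri (T m)) = int (T m) * (int (T m) + 1)"
      using arg_cong[OF two_tri[of "T m"], of int] by (simp add: algebra_simps)
    have c: "int (tri (X m)) = int k * int (tri (T m))" using arg_cong[OF triX[of m], of int] by (simp add: algebra_simps)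
    have "(u m)^2 - int k * (v m)^2 = 4 * (2 * int (tri (X m))) + 1 - int k * (4 * (2 * int (tri (T m))) + 1)"
      unfolding u_def v_def a b by (simp add: power2_eq_square algebra_simps)
    also have "\<dots> = 1 - int k" using c by (simp add: algebra_simps)
    finally show "(u m)^2 - int k * (v m)^2 = 1 - int k" .
  qed
  have recu: "\<And>m. m \<ge> 2 * r \<Longrightarrow> u m = 2 * (\<kappa> + 1) * u (m - r) - u (m - 2 * r)"
  proof -
    fix m :: nat assume "m \<ge> 2 * r"
    from rec_xi[OF this] show "u m = 2 * (\<kappa> + 1) * u (m - r) - u (m - 2 * r)"
      unfolding u_def X_def by (simp add: algebra_simps)
  qed
  have recv: "\<And>m. m \<ge> 2 * r \<Longrightarrow> v m = 2 * (\<kappa> + 1) * v (m - r) - v (m - 2 * r)"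
  proof -
    fix m :: nat assume "m \<ge> 2 * r"
    from rec_t[OF this] show "v m = 2 * (\<kappa> + 1) * v (m - r) - v (m - 2 * r)"
      unfolding v_def T_def by (simp add: algebra_simps)
  qed
  have kpos: "\<kappa> \<ge> 0" using kappa_def by simp
  have D: "\<And>n. n \<ge> r \<Longrightarrow> (u (n-r))^2 + (u n)^2 - 2*(\<kappa>+1)*u (n-r) * u n = (1 - int k) * (1 - (\<kappa>+1)^2)"
  proof -
    fix n assume n: "n \<ge> r"
    have i1: "n + r - r = n" "n + r - 2 * r = n - r" using n by auto
    have U: "u (n + r) = 2 * (\<kappa>+1) * u n - u (n - r)" using recu[of "n+r"] n i1 by simp
    have V: "v (n + r) = 2 * (\<kappa>+1) * v n - v (n - r)" using recv[of "n+r"] n i1 by simp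
    show "(u (n-r))^2 + (u n)^2 - 2*(\<kappa>+1)*u (n-r) * u n = (1 - int k) * (1 - (\<kappa>+1)^2)"
      by (rule alg_int[where p = "v (n-r)" and q = "v n"]) (use k2 kpos pell[of "n-r"] pell[of n] pell[of "n+r"] U V in auto)
  qed
  define Q where "Q = (\<lambda>a b::int. (a - b)^2 - \<kappa> * (a + 2 * a * b + b))"
  have Q4: "\<And>n. 4 * Q (int (X n)) (int (X (n - r))) = (u (n-r))^2 + (u n)^2 - 2*(\<kappa>+1)*u (n-r) * u n + 2 * \<kappa>"
    unfolding Q_def u_def by (simp add: power2_eq_square algebra_simps)
  have "4 * Q (int (X n)) (int (X (n - r))) = 4 * Q (int (X r)) (int (X (r - r)))"
    using Q4[of n] Q4[of r] D[of n] D[of r] n_ge by simp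
  then have "Q (int (X n)) (int (X (n - r))) = Q (int (X r)) 0" using X0 T0 by simp
  also have "\<dots> = int (X r) * (int (X (r - 1)) + 1)"
  proof -
    have e: "int (X r) - \<kappa> = int (X (r - 1)) + 1" using kappa_xi unfolding X_def by simp
    have "Q (int (X r)) 0 = int (X r) * (int (X r) - \<kappa>)" unfolding Q_def by (simp add: power2_eq_square algebra_simps)
    then show ?thesis using e by simp
  qed
  finally show ?thesis unfolding Q_def X_def .
qed

end
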